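(* Let $\mathbb{K}$ be a field and let $\Delta$ be a $d$-dimensional simplicial complex on vertex set $[n]$ whose $d$-dimensional facets are $F_1,\dots,F_s$ (it may have further facets of smaller dimension). Assume $\tilde H_d(\Delta;\mathbb{K})\neq 0$ and let $F=c_1F_1+\dots+c_sF_s$ ($c_i\in\mathbb{K}$) be a nonzero element of $\tilde H_d(\Delta;\mathbb{K})$. Put $$F_\Delta=c_1x_{F_1}V(F_1)+\dots+c_sx_{F_s}V(F_s)=c_1\sum_{\sigma\in S^{F_1}}\operatorname{sign}(\sigma)\,x^{\mu}_{\sigma(F_1)}+\dots+c_s\sum_{\sigma\in S^{F_s}}\operatorname{sign}(\sigma)\,x^{\mu}_{\sigma(F_s)},$$ where $\mu=(d+1,d,\dots,1)$. Then $F_\Delta$ (viewed in $S$ via $x_i\mapsto y_i$) is a $\binom{d+2}{2}$-coinvariant stress of $\Delta$, i.e. $F_\Delta\in\big(I_\Delta+(e_1,\dots,e_{d+1})\big)^{-1}_{-\binom{d+2}{2}}$. In particular $\dim_{\mathbb{K}}\big(I_\Delta+(e_1,\dots,e_{d+1})\big)^{-1}_{-\binom{d+2}{2}}>0$.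
   Context: $R=\mathbb{K}[x_1,\dots,x_n]$ with $\deg x_i=1$; $S=\mathbb{K}[y_1,\dots,y_n]$ with $\deg y_i=-1$, made into an $R$-module by contraction: $x^a\circ y^b=y^{b-a}$ if $b_i\ge a_i$ for all $i$ and $0$ otherwise, extended linearly. For an ideal $I\subset R$, its inverse system is $I^{-1}=\{G\in S: g\circ G=0 \text{ for all } g\in I\}$, and $I^{-1}_{-k}$ is its degree $-k$ part. Polynomials in $R$ are identified with polynomials in $S$ via $x_i\leftrightarrow y_i$. $I_\Delta=(x_\tau:\tau\subseteq[n],\ \tau\notin\Delta)$ is the Stanley–Reisner ideal, where $x_\tau=\prod_{i\in\tau}x_i$. $e_k=\sum_{j_1<\dots<j_k}x_{j_1}\cdots x_{j_k}$ is the $k$-th elementary symmetric polynomial in $x_1,\dots,x_n$. The space of $k$-coinvariant stresses of $\Delta$ is $(I_\Delta+(e_1,\dots,e_{d+1}))^{-1}_{-k}$. For $B=\{i_1<\dots<i_m\}\subseteq[n]$, $V(B)=\prod_{j<k}(x_{i_j}-x_{i_k})$ is the Vandermonde determinant. Simplicial homology is computed with faces oriented by increasing vertex order. $S^{F}$ is the symmetric group on the elements of $F$; for $F=\{i_1<\dots<i_{d+1}\}$ and $\sigma\in S^F$, $x^{\mu}_{\sigma(F)}=\prod_{j=1}^{d+1}x_{\sigma(i_j)}^{\mu_j}$. *)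

theory Defs
  imports "HOL-Library.Poly_Mapping"
begin

text \<open>Variable i stands for x_i
  (and, via the identification x_i = y_i, also for y_i).  Vertex set is [n] = {1..n}.\<close>

type_synonym 'a mpoly = "(nat \<Rightarrow>\<^sub>0 nat) \<Rightarrow>\<^sub>0 'a"

definition Var :: "nat \<Rightarrow> 'a::comm_ring_1 mpoly" where
  "Var i = Poly_Mapping.single (Poly_Mapping.single i 1) 1"

definition poly_ring :: "nat \<Rightarrow> 'a::comm_ring_1 mpoly set" where
  "poly_ring n = {p. \<forall>m\<in>Poly_Mapping.keys p. Poly_Mapping.keys m \<subseteq> {1..n}}"

text \<open>Homogeneous of (total) degree k (in S this is degree -k).\<close>
definition homogeneous :: "nat \<Rightarrow> 'a::comm_ring_1 mpoly \<Rightarrow> bool" where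
  "homogeneous k p \<longleftrightarrow> (\<forall>m\<in>Poly_Mapping.keys p. (\<Sum>i\<in>Poly_Mapping.keys m. Poly_Mapping.lookup m i) = k)"

definition mon_dvd :: "(nat \<Rightarrow>\<^sub>0 nat) \<Rightarrow> (nat \<Rightarrow>\<^sub>0 nat) \<Rightarrow> bool" where
  "mon_dvd a b \<longleftrightarrow> (\<forall>i. Poly_Mapping.lookup a i \<le> Poly_Mapping.lookup b i)"

definition contract :: "'a::comm_ring_1 mpoly \<Rightarrow> 'a mpoly \<Rightarrow> 'a mpoly" where
  "contract g G = (\<Sum>a\<in>Poly_Mapping.keys g. \<Sum>b\<in>Poly_Mapping.keys G.
      (if mon_dvd a b then Poly_Mapping.single (b - a) (Poly_Mapping.lookup g a * Poly_Mapping.lookup G b) else 0))"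

definition ideal_gen :: "nat \<Rightarrow> 'a::comm_ring_1 mpoly set \<Rightarrow> 'a mpoly set" where
  "ideal_gen n Gs = {\<Sum>g\<in>Gs. h g * g | h. \<forall>g\<in>Gs. h g \<in> poly_ring n}"

definition inverse_system_deg :: "nat \<Rightarrow> 'a::comm_ring_1 mpoly set \<Rightarrow> nat \<Rightarrow> 'a mpoly set" where
  "inverse_system_deg n I k =
     {G \<in> poly_ring n. homogeneous k G \<and> (\<forall>g\<in>I. contract g G = 0)}"

definition x_set :: "nat set \<Rightarrow> 'a::comm_ring_1 mpoly" where
  "x_set \<tau> = (\<Prod>i\<in>\<tau>. Var i)"

definition elem_sym :: "nat \<Rightarrow> nat \<Rightarrow> 'a::comm_ring_1 mpoly" where
  "elem_sym n k = (\<Sum>\<tau>\<in>{\<tau>. \<tau> \<subseteq> {1..n} \<and> card \<tau> = k}. x_set \<tau>)"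

definition vandermonde :: "nat set \<Rightarrow> 'a::comm_ring_1 mpoly" where
  "vandermonde B = (\<Prod>(i,j)\<in>{(i,j). i \<in> B \<and> j \<in> B \<and> i < j}. Var i - Var j)"

definition SR_gens :: "nat \<Rightarrow> nat set set \<Rightarrow> 'a::comm_ring_1 mpoly set" where
  "SR_gens n \<Delta> = x_set ` {\<tau>. \<tau> \<subseteq> {1..n} \<and> \<tau> \<notin> \<Delta>}"

definition coinv_ideal :: "nat \<Rightarrow> nat set set \<Rightarrow> nat \<Rightarrow> 'a::comm_ring_1 mpoly set" where
  "coinv_ideal n \<Delta> d = ideal_gen n (SR_gens n \<Delta> \<union> elem_sym n ` {1..d+1})"

definition coinv_stresses :: "nat \<Rightarrow> nat set set \<Rightarrow> nat \<Rightarrow> nat \<Rightarrow> 'a::comm_ring_1 mpoly set" where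
  "coinv_stresses n \<Delta> d k = inverse_system_deg n (coinv_ideal n \<Delta> d) k"

definition simplicial_complex :: "nat \<Rightarrow> nat set set \<Rightarrow> bool" where
  "simplicial_complex n \<Delta> \<longleftrightarrow> \<Delta> \<noteq> {} \<and> (\<forall>F\<in>\<Delta>. F \<subseteq> {1..n}) \<and>
     (\<forall>F\<in>\<Delta>. \<forall>G. G \<subseteq> F \<longrightarrow> G \<in> \<Delta>)"

definition dim_complex :: "nat set set \<Rightarrow> nat \<Rightarrow> bool" where
  "dim_complex \<Delta> d \<longleftrightarrow> (\<exists>F\<in>\<Delta>. card F = d + 1) \<and> (\<forall>F\<in>\<Delta>. card F \<le> d + 1)"

text \<open>Reduced simplicial boundary with faces oriented by increasing vertex order:
  coefficient of the (card G)-element face G in the boundary of the chain c supported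
  on the (card G + 1)-element faces of Delta.  The empty face is included
  (reduced homology).\<close>
definition boundary_coeff :: "nat set set \<Rightarrow> (nat set \<Rightarrow> 'a::comm_ring_1) \<Rightarrow> nat set \<Rightarrow> 'a" where
  "boundary_coeff \<Delta> c G = (\<Sum>v\<in>{v. v \<notin> G \<and> insert v G \<in> \<Delta>}.
      (-1) ^ card {u\<in>G. u < v} * c (insert v G))"

text \<open>Since Delta has no faces of dimension d+1, H~_d(Delta;K) = Z_d, the d-cycles:
  chains c on the d-faces with zero boundary.  Nonzero homology class = nonzero cycle.\<close>
definition d_faces :: "nat set set \<Rightarrow> nat \<Rightarrow> nat set set" where
  "d_faces \<Delta> d = {F\<in>\<Delta>. card F = d + 1}"

definition is_top_cycle :: "nat set set \<Rightarrow> nat \<Rightarrow> (nat set \<Rightarrow> 'a::comm_ring_1) \<Rightarrow> bool" where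
  "is_top_cycle \<Delta> d c \<longleftrightarrow> (\<forall>G\<in>\<Delta>. card G = d \<longrightarrow> boundary_coeff \<Delta> c G = 0)"

definition F_Delta :: "nat set set \<Rightarrow> nat \<Rightarrow> (nat set \<Rightarrow> 'a::comm_ring_1) \<Rightarrow> 'a mpoly" where
  "F_Delta \<Delta> d c = (\<Sum>F\<in>d_faces \<Delta> d. Poly_Mapping.single 0 (c F) * x_set F * vandermonde F)"

end

theory Submission
  imports Defs
begin


type_synonym mono = "nat \<Rightarrow>\<^sub>0 nat"

lemma lookup_single_mult:
  fixes p :: "('b::cancel_comm_monoid_add \<Rightarrow>\<^sub>0 'a::comm_ring_1)"
  shows "Poly_Mapping.lookup (Poly_Mapping.single t c * p) k = (\<Sum>q. c * Poly_Mapping.lookup p q when k = t + q)"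
  unfolding lookup_mult lookup_single
  by (simp add: when_mult Sum_any_right_distrib mult_when)

lemma lookup_single_mult_add:
  fixes p :: "'a::comm_ring_1 mpoly"
  shows "Poly_Mapping.lookup (Poly_Mapping.single t c * p) (t + m) = c * Poly_Mapping.lookup p m"
  unfolding lookup_single_mult by simp

lemma lookup_single_mult_not:
  fixes p :: "'a::comm_ring_1 mpoly"
  assumes "\<not> (\<exists>q. k = t + q)"
  shows "Poly_Mapping.lookup (Poly_Mapping.single t c * p) k = 0"
  unfolding lookup_single_mult using assms by (simp add: when_def)

lemma mono_add_lookup: "Poly_Mapping.lookup ((a::mono) + b) i = Poly_Mapping.lookup a i + Poly_Mapping.lookup b i"
  by (simp add: lookup_add)

lemma mon_dvd_minus_eq:
  assumes "mon_dvd a b"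
  shows "(b - a = m) \<longleftrightarrow> (b = a + (m::mono))"
proof -
  have "(b - a = m) \<longleftrightarrow> (\<forall>i. Poly_Mapping.lookup b i - Poly_Mapping.lookup a i = Poly_Mapping.lookup m i)"
    by (simp add: poly_mapping_eq_iff fun_eq_iff lookup_minus)
  also have "\<dots> \<longleftrightarrow> (\<forall>i. Poly_Mapping.lookup b i = Poly_Mapping.lookup a i + Poly_Mapping.lookup m i)"
    using assms unfolding mon_dvd_def by (metis add_diff_cancel_left' le_add_diff_inverse)
  also have "\<dots> \<longleftrightarrow> (b = a + m)"
    by (simp add: poly_mapping_eq_iff fun_eq_iff lookup_add)
  finally show ?thesis .
qed

lemma mon_dvd_add: "mon_dvd a (a + (m::mono))"
  unfolding mon_dvd_def by (simp add: lookup_add)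

lemma lookup_contract:
  "Poly_Mapping.lookup (contract g G) m =
     (\<Sum>a\<in>Poly_Mapping.keys g. Poly_Mapping.lookup g a * Poly_Mapping.lookup G (a + m))"
proof -
  have inner: "(\<Sum>b\<in>Poly_Mapping.keys G. Poly_Mapping.lookup (if mon_dvd a b then Poly_Mapping.single (b - a) (Poly_Mapping.lookup g a * Poly_Mapping.lookup G b) else 0) m)
     = Poly_Mapping.lookup g a * Poly_Mapping.lookup G (a + m)" for a
  proof -
    have "(\<Sum>b\<in>Poly_Mapping.keys G. Poly_Mapping.lookup (if mon_dvd a b then Poly_Mapping.single (b - a) (Poly_Mapping.lookup g a * Poly_Mapping.lookup G b) else 0) m)
       = (\<Sum>b\<in>Poly_Mapping.keys G. if b = a + m then Poly_Mapping.lookup g a * Poly_Mapping.lookup G b else 0)"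
    proof (rule sum.cong[OF refl])
      fix b
      show "Poly_Mapping.lookup (if mon_dvd a b then Poly_Mapping.single (b - a) (Poly_Mapping.lookup g a * Poly_Mapping.lookup G b) else 0) m
         = (if b = a + m then Poly_Mapping.lookup g a * Poly_Mapping.lookup G b else 0)"
        using mon_dvd_minus_eq[of a b m] mon_dvd_add[of a m]
        by (auto simp: lookup_single when_def)
    qed
    also have "\<dots> = Poly_Mapping.lookup g a * Poly_Mapping.lookup G (a + m)"
      by (simp add: sum.delta in_keys_iff)
    finally show ?thesis .
  qed
  show ?thesis
    unfolding contract_def lookup_sum using inner by simp
qed

lemma lookup_contract_superset:
  assumes "finite A" "Poly_Mapping.keys g \<subseteq> A"
  shows "Poly_Mapping.lookup (contract g G) m =
     (\<Sum>a\<in>A. Poly_Mapping.lookup g a * Poly_Mapping.lookup G (a + m))"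
  unfolding lookup_contract
  by (rule sum.mono_neutral_left) (use assms in \<open>auto simp: in_keys_iff\<close>)

lemma contract_0_left [simp]: "contract 0 G = 0"
  by (simp add: contract_def)

lemma contract_sum_left:
  "contract (\<Sum>i\<in>I. g i) G = (\<Sum>i\<in>I. contract (g i) G)"
proof (cases "finite I")
  case True
  let ?A = "\<Union>i\<in>I. Poly_Mapping.keys (g i)"
  have fA: "finite ?A" using True by auto
  show ?thesis
  proof (rule poly_mapping_eqI)
    fix m
    have "Poly_Mapping.lookup (contract (\<Sum>i\<in>I. g i) G) m
        = (\<Sum>a\<in>?A. Poly_Mapping.lookup (\<Sum>i\<in>I. g i) a * Poly_Mapping.lookup G (a + m))"
      by (rule lookup_contract_superset[OF fA keys_sum])
    also have "\<dots> = (\<Sum>i\<in>I. \<Sum>a\<in>?A. Poly_Mapping.lookup (g i) a * Poly_Mapping.lookup G (a + m))"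
      by (simp add: lookup_sum sum_distrib_right sum.swap[of _ ?A I])
    also have "\<dots> = (\<Sum>i\<in>I. Poly_Mapping.lookup (contract (g i) G) m)"
      by (rule sum.cong[OF refl], rule lookup_contract_superset[symmetric]) (use fA in auto)
    finally show "Poly_Mapping.lookup (contract (\<Sum>i\<in>I. g i) G) m = Poly_Mapping.lookup (\<Sum>i\<in>I. contract (g i) G) m"
      by (simp add: lookup_sum)
  qed
qed simp

lemma contract_sum_right:
  "contract g (\<Sum>i\<in>I. G i) = (\<Sum>i\<in>I. contract g (G i))"
proof (cases "finite I")
  case True
  show ?thesis
    by (rule poly_mapping_eqI)
       (simp add: lookup_contract lookup_sum sum_distrib_left sum.swap[of _ I])
qed (simp add: contract_def)

lemma contract_add_right: "contract g (G + H) = contract g G + contract g H"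
  by (rule poly_mapping_eqI) (simp add: lookup_contract lookup_add distrib_left sum.distrib)

lemma contract_scalar_right:
  fixes G :: "'a::comm_ring_1 mpoly"
  shows "contract g (Poly_Mapping.single 0 c * G) = Poly_Mapping.single 0 c * contract g G"
proof (rule poly_mapping_eqI)
  fix m
  have *: "Poly_Mapping.lookup (Poly_Mapping.single 0 c * H) k = c * Poly_Mapping.lookup H k" for H :: "'a mpoly" and k
    using lookup_single_mult_add[of 0 c H k] by simp
  show "Poly_Mapping.lookup (contract g (Poly_Mapping.single 0 c * G)) m =
        Poly_Mapping.lookup (Poly_Mapping.single 0 c * contract g G) m"
    unfolding * lookup_contract by (simp add: sum_distrib_left mult.left_commute)
qed

lemma lookup_contract_single:
  fixes G :: "'a::comm_ring_1 mpoly"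
  shows "Poly_Mapping.lookup (contract (Poly_Mapping.single t c) G) m = c * Poly_Mapping.lookup G (t + m)"
  by (simp add: lookup_contract)



lemma poly_as_sum:
  "p = (\<Sum>a\<in>Poly_Mapping.keys p. Poly_Mapping.single a (Poly_Mapping.lookup p a))"
proof (rule poly_mapping_eqI)
  fix k
  have "(\<Sum>a\<in>Poly_Mapping.keys p. Poly_Mapping.lookup (Poly_Mapping.single a (Poly_Mapping.lookup p a)) k)
     = (\<Sum>a\<in>Poly_Mapping.keys p. if a = k then Poly_Mapping.lookup p a else 0)"
    by (rule sum.cong) (auto simp: lookup_single when_def)
  also have "\<dots> = Poly_Mapping.lookup p k"
    by (simp add: sum.delta' in_keys_iff)
  finally show "Poly_Mapping.lookup p k = Poly_Mapping.lookup (\<Sum>a\<in>Poly_Mapping.keys p. Poly_Mapping.single a (Poly_Mapping.lookup p a)) k"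
    by (simp add: lookup_sum)
qed

lemma contract_single_single:
  fixes G :: "'a::comm_ring_1 mpoly"
  shows "contract (Poly_Mapping.single a c * Poly_Mapping.single b e) G
       = contract (Poly_Mapping.single a c) (contract (Poly_Mapping.single b e) G)"
  by (rule poly_mapping_eqI) (simp add: mult_single lookup_contract_single add_ac mult_ac)

lemma contract_mult:
  fixes G :: "'a::comm_ring_1 mpoly"
  shows "contract (p * q) G = contract p (contract q G)"
proof -
  let ?P = "\<lambda>a. Poly_Mapping.single a (Poly_Mapping.lookup p a)"
  let ?Q = "\<lambda>b. Poly_Mapping.single b (Poly_Mapping.lookup q b)"
  have "p * q = (\<Sum>a\<in>Poly_Mapping.keys p. ?P a) * (\<Sum>b\<in>Poly_Mapping.keys q. ?Q b)"
    using poly_as_sum[of p] poly_as_sum[of q] by simp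
  also have "\<dots> = (\<Sum>a\<in>Poly_Mapping.keys p. \<Sum>b\<in>Poly_Mapping.keys q. ?P a * ?Q b)"
    by (rule sum_product)
  finally have pq: "p * q = (\<Sum>a\<in>Poly_Mapping.keys p. \<Sum>b\<in>Poly_Mapping.keys q. ?P a * ?Q b)" .
  have "contract (p * q) G = (\<Sum>a\<in>Poly_Mapping.keys p. \<Sum>b\<in>Poly_Mapping.keys q. contract (?P a) (contract (?Q b) G))"
    unfolding pq contract_sum_left contract_single_single ..
  also have "\<dots> = (\<Sum>a\<in>Poly_Mapping.keys p. contract (?P a) (contract (\<Sum>b\<in>Poly_Mapping.keys q. ?Q b) G))"
    unfolding contract_sum_right contract_sum_left ..
  also have "\<dots> = contract p (contract q G)"
    unfolding contract_sum_left[symmetric] using poly_as_sum[of p] poly_as_sum[of q] by simp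
  finally show ?thesis .
qed



definition ind :: "nat set \<Rightarrow> mono" where
  "ind \<tau> = (\<Sum>i\<in>\<tau>. Poly_Mapping.single i 1)"

lemma lookup_ind: "finite \<tau> \<Longrightarrow> Poly_Mapping.lookup (ind \<tau>) i = (if i \<in> \<tau> then 1 else 0)"
  unfolding ind_def lookup_sum lookup_single by (simp add: when_def)

lemma keys_ind: "finite \<tau> \<Longrightarrow> Poly_Mapping.keys (ind \<tau>) = \<tau>"
  by (auto simp: in_keys_iff lookup_ind split: if_splits)

lemma Var_single: "Var i = Poly_Mapping.single (Poly_Mapping.single i 1) 1"
  by (simp add: Var_def)

lemma x_set_eq: "finite \<tau> \<Longrightarrow> (x_set \<tau> :: 'a::comm_ring_1 mpoly) = Poly_Mapping.single (ind \<tau>) 1"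
proof (induction \<tau> rule: finite_induct)
  case empty
  then show ?case by (simp add: x_set_def ind_def)
next
  case (insert i \<tau>)
  then show ?case
    by (simp add: x_set_def ind_def Var_def mult_single)
qed

lemma x_set_union:
  "finite A \<Longrightarrow> finite B \<Longrightarrow> A \<inter> B = {} \<Longrightarrow> (x_set (A \<union> B) :: 'a::comm_ring_1 mpoly) = x_set A * x_set B"
  unfolding x_set_def by (rule prod.union_disjoint)

definition vars_in :: "nat set \<Rightarrow> 'a::comm_ring_1 mpoly \<Rightarrow> bool" where
  "vars_in S p \<longleftrightarrow> (\<forall>m\<in>Poly_Mapping.keys p. Poly_Mapping.keys m \<subseteq> S)"

lemma keys_mono_add: "Poly_Mapping.keys ((a::mono) + b) = Poly_Mapping.keys a \<union> Poly_Mapping.keys b"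
  by (auto simp: in_keys_iff lookup_add)

lemma vars_in_0 [simp]: "vars_in S 0"
  by (simp add: vars_in_def)

lemma vars_in_single: "Poly_Mapping.keys t \<subseteq> S \<Longrightarrow> vars_in S (Poly_Mapping.single t c)"
  by (simp add: vars_in_def)

lemma vars_in_const: "vars_in S (Poly_Mapping.single 0 c)"
  by (simp add: vars_in_def)

lemma vars_in_one: "vars_in S 1"
  by (simp add: vars_in_def)

lemma vars_in_Var: "i \<in> S \<Longrightarrow> vars_in S (Var i)"
  by (simp add: vars_in_def Var_def)

lemma vars_in_add: "vars_in S p \<Longrightarrow> vars_in S q \<Longrightarrow> vars_in S (p + q)"
  using keys_add[of p q] by (auto simp: vars_in_def)

lemma vars_in_diff: "vars_in S p \<Longrightarrow> vars_in S q \<Longrightarrow> vars_in S (p - q)"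
  using keys_diff[of p q] by (auto simp: vars_in_def)

lemma vars_in_mult: "vars_in S p \<Longrightarrow> vars_in S q \<Longrightarrow> vars_in S (p * q)"
  using keys_mult[of p q] by (fastforce simp: vars_in_def keys_mono_add)

lemma vars_in_sum: "(\<And>i. i \<in> I \<Longrightarrow> vars_in S (f i)) \<Longrightarrow> vars_in S (\<Sum>i\<in>I. f i)"
  by (induction I rule: infinite_finite_induct) (auto intro: vars_in_add)

lemma vars_in_prod: "(\<And>i. i \<in> I \<Longrightarrow> vars_in S (f i)) \<Longrightarrow> vars_in S (\<Prod>i\<in>I. f i)"
  by (induction I rule: infinite_finite_induct) (auto intro: vars_in_mult vars_in_one)

lemma vars_in_mono: "vars_in S p \<Longrightarrow> S \<subseteq> T \<Longrightarrow> vars_in T p"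
  by (auto simp: vars_in_def)

lemma vars_in_x_set: "\<tau> \<subseteq> S \<Longrightarrow> vars_in S (x_set \<tau>)"
  unfolding x_set_def by (rule vars_in_prod) (auto intro: vars_in_Var)

lemma vars_in_vandermonde: "F \<subseteq> S \<Longrightarrow> vars_in S (vandermonde F)"
  unfolding vandermonde_def
  by (rule vars_in_prod) (auto intro!: vars_in_diff vars_in_Var)

subsection \<open>Homogeneity\<close>

definition deg :: "mono \<Rightarrow> nat" where
  "deg m = (\<Sum>i\<in>Poly_Mapping.keys m. Poly_Mapping.lookup m i)"

lemma deg_add: "deg (a + b) = deg a + deg b"
  unfolding deg_def by (rule setsum_keys_plus_distrib) auto

lemma deg_zero [simp]: "deg 0 = 0"
  by (simp add: deg_def)

lemma deg_single: "deg (Poly_Mapping.single i k) = k"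
  by (simp add: deg_def)

lemma homogeneous_iff_deg: "homogeneous k p \<longleftrightarrow> (\<forall>m\<in>Poly_Mapping.keys p. deg m = k)"
  by (simp add: homogeneous_def deg_def)

lemma hom_0 [simp]: "homogeneous k 0"
  by (simp add: homogeneous_def)

lemma hom_single: "deg t = k \<Longrightarrow> homogeneous k (Poly_Mapping.single t c)"
  by (simp add: homogeneous_iff_deg)

lemma hom_const: "homogeneous 0 (Poly_Mapping.single 0 c)"
  by (simp add: homogeneous_iff_deg)

lemma hom_one: "homogeneous 0 1"
  by (simp add: homogeneous_iff_deg)

lemma hom_Var: "homogeneous 1 (Var i)"
  by (simp add: homogeneous_iff_deg Var_def deg_single)

lemma hom_add: "homogeneous k p \<Longrightarrow> homogeneous k q \<Longrightarrow> homogeneous k (p + q)"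
  using keys_add[of p q] by (auto simp: homogeneous_iff_deg)

lemma hom_diff: "homogeneous k p \<Longrightarrow> homogeneous k q \<Longrightarrow> homogeneous k (p - q)"
  using keys_diff[of p q] by (auto simp: homogeneous_iff_deg)

lemma hom_mult: "homogeneous j p \<Longrightarrow> homogeneous k q \<Longrightarrow> homogeneous (j + k) (p * q)"
  using keys_mult[of p q] by (fastforce simp: homogeneous_iff_deg deg_add)

lemma hom_sum: "(\<And>i. i \<in> I \<Longrightarrow> homogeneous k (f i)) \<Longrightarrow> homogeneous k (\<Sum>i\<in>I. f i)"
  by (induction I rule: infinite_finite_induct) (auto intro: hom_add)

lemma hom_prod: "(\<And>i. i \<in> I \<Longrightarrow> homogeneous (k i) (f i)) \<Longrightarrow> homogeneous (\<Sum>i\<in>I. k i) (\<Prod>i\<in>I. f i)"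
proof (induction I rule: infinite_finite_induct)
  case (infinite A)
  then show ?case by (simp add: hom_one)
next
  case empty
  then show ?case by (simp add: hom_one)
next
  case (insert x F)
  then show ?case by (simp add: hom_mult)
qed

lemma hom_x_set: "finite \<tau> \<Longrightarrow> homogeneous (card \<tau>) (x_set \<tau>)"
  using hom_prod[of \<tau> "\<lambda>_. 1" Var] hom_Var unfolding x_set_def by auto

subsection \<open>Vandermonde recursion\<close>

definition Lp :: "nat \<Rightarrow> nat set \<Rightarrow> 'a::comm_ring_1 mpoly" where
  "Lp a S = (\<Prod>u\<in>S. Var a - Var u)"

lemma vandermonde_insert_min:
  assumes "finite S" "\<forall>u\<in>S. a < u"
  shows "(vandermonde (insert a S) :: 'a::comm_ring_1 mpoly) = Lp a S * vandermonde S"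
proof -
  have a: "a \<notin> S" using assms by auto
  have eq: "{(i,j). i \<in> insert a S \<and> j \<in> insert a S \<and> i < j} = (\<lambda>u. (a,u)) ` S \<union> {(i,j). i \<in> S \<and> j \<in> S \<and> i < j}"
    using assms by auto
  have fin: "finite {(i,j). i \<in> S \<and> j \<in> S \<and> i < j}"
    by (rule finite_subset[of _ "S \<times> S"]) (use assms in auto)
  have disj: "(\<lambda>u. (a,u)) ` S \<inter> {(i,j). i \<in> S \<and> j \<in> S \<and> i < j} = {}" using a by auto
  have "(vandermonde (insert a S) :: 'a mpoly) =
      (\<Prod>(i,j)\<in>(\<lambda>u. (a,u)) ` S. Var i - Var j) * (\<Prod>(i,j)\<in>{(i,j). i \<in> S \<and> j \<in> S \<and> i < j}. Var i - Var j)"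
    unfolding vandermonde_def eq by (rule prod.union_disjoint) (use assms fin disj in auto)
  also have "(\<Prod>(i,j)\<in>(\<lambda>u. (a,u)) ` S. (Var i - Var j :: 'a mpoly)) = Lp a S"
    unfolding Lp_def by (subst prod.reindex) (auto simp: inj_on_def)
  finally show ?thesis unfolding vandermonde_def by simp
qed

lemma vandermonde_empty [simp]: "vandermonde {} = 1"
  by (simp add: vandermonde_def)

lemma hom_Lp: "finite S \<Longrightarrow> homogeneous (card S) (Lp a S)"
proof -
  have "\<And>u. homogeneous 1 (Var a - Var u)" by (intro hom_diff hom_Var)
  then show ?thesis
    using hom_prod[of S "\<lambda>_. 1" "\<lambda>u. Var a - Var u"] unfolding Lp_def by auto
qed

lemma hom_vandermonde: "finite F \<Longrightarrow> homogeneous (card F choose 2) (vandermonde F)"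
proof (induction F rule: finite_linorder_min_induct)
  case empty
  then show ?case using hom_one by (simp add: numeral_2_eq_2)
next
  case (insert b A)
  have "b \<notin> A" using insert by auto
  then have "card (insert b A) choose 2 = card A + (card A choose 2)"
    using insert by (simp add: numeral_2_eq_2)
  with insert show ?case
    by (simp add: vandermonde_insert_min hom_mult hom_Lp)
qed



definition pos :: "nat set \<Rightarrow> nat \<Rightarrow> nat" where
  "pos H v = card {u\<in>H. u < v}"

definition Dw :: "(nat \<Rightarrow> 'a::comm_ring_1 mpoly) \<Rightarrow> nat set \<Rightarrow> 'a mpoly" where
  "Dw w H = (\<Sum>v\<in>H. (-1) ^ pos H v * w v * vandermonde (H - {v}))"

lemma pos_insert_min:
  assumes "finite H" "\<forall>u\<in>H. a < u" "v \<in> H"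
  shows "pos (insert a H) v = Suc (pos H v)"
proof -
  have "{u\<in>insert a H. u < v} = insert a {u\<in>H. u < v}" using assms by auto
  moreover have "a \<notin> {u\<in>H. u < v}" using assms by auto
  ultimately show ?thesis unfolding pos_def using assms by simp
qed

lemma pos_min: "\<forall>u\<in>H. a < u \<Longrightarrow> pos (insert a H) a = 0"
  unfolding pos_def by auto

lemma Lp_remove: "finite S \<Longrightarrow> v \<in> S \<Longrightarrow> Lp a S = (Var a - Var v) * Lp a (S - {v})"
  unfolding Lp_def by (rule prod.remove)

lemma Dw_split:
  assumes "finite H" "\<forall>u\<in>H. a < u"
  shows "Dw w (insert a H) = w a * vandermonde H
     - (\<Sum>v\<in>H. (-1) ^ pos H v * w v * Lp a (H - {v}) * vandermonde (H - {v}))"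
proof -
  have a: "a \<notin> H" using assms by auto
  have "Dw w (insert a H) = (-1) ^ pos (insert a H) a * w a * vandermonde (insert a H - {a})
     + (\<Sum>v\<in>H. (-1) ^ pos (insert a H) v * w v * vandermonde (insert a H - {v}))"
    unfolding Dw_def using assms a by (simp add: sum.insert)
  also have "(-1) ^ pos (insert a H) a * w a * vandermonde (insert a H - {a}) = w a * vandermonde H"
    using pos_min[OF assms(2)] a by simp
  also have "(\<Sum>v\<in>H. (-1) ^ pos (insert a H) v * w v * vandermonde (insert a H - {v}))
     = (\<Sum>v\<in>H. - ((-1) ^ pos H v * w v * Lp a (H - {v}) * vandermonde (H - {v})))"
  proof (rule sum.cong[OF refl])
    fix v assume v: "v \<in> H"
    have "insert a H - {v} = insert a (H - {v})" using v a by auto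
    then have e1: "vandermonde (insert a H - {v}) = Lp a (H - {v}) * vandermonde (H - {v})"
      using vandermonde_insert_min[of "H - {v}" a] assms by auto
    show "(-1) ^ pos (insert a H) v * w v * vandermonde (insert a H - {v})
      = - ((-1) ^ pos H v * w v * Lp a (H - {v}) * vandermonde (H - {v}))"
      unfolding e1 pos_insert_min[OF assms v] by (simp add: mult_ac)
  qed
  finally show ?thesis by (simp add: sum_negf)
qed

abbreviation D0 :: "nat set \<Rightarrow> 'a::comm_ring_1 mpoly" where
  "D0 \<equiv> Dw (\<lambda>_. 1)"

lemma D0_insert_min:
  assumes "finite R" "\<forall>u\<in>R. a < u"
  shows "D0 (insert a R) = vandermonde R - (\<Sum>v\<in>R. (-1) ^ pos R v * Lp a (R - {v}) * vandermonde (R - {v}))"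
  using Dw_split[OF assms, of "\<lambda>_. 1"] by simp

lemma D0_expr:
  assumes "finite R" "\<forall>u\<in>R. b < u" "a < b"
  shows "(D0 (insert a (insert b R)) :: 'a::comm_ring_1 mpoly) = Lp b R * vandermonde R - Lp a R * vandermonde R
    + (Var a - Var b) * (\<Sum>v\<in>R. (-1) ^ pos R v * Lp a (R - {v}) * Lp b (R - {v}) * vandermonde (R - {v}))"
proof -
  have fbR: "finite (insert b R)" using assms by auto
  have abR: "\<forall>u\<in>insert b R. a < u" using assms by auto
  have bR: "b \<notin> R" using assms by auto
  have "(D0 (insert a (insert b R)) :: 'a mpoly) = vandermonde (insert b R)
     - Dw (\<lambda>v. Lp a (insert b R - {v})) (insert b R)"
    unfolding Dw_split[OF fbR abR] unfolding Dw_def by (simp add: mult_ac)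
  also have "Dw (\<lambda>v. Lp a (insert b R - {v})) (insert b R) = (Lp a R :: 'a mpoly) * vandermonde R
     - (\<Sum>v\<in>R. (-1) ^ pos R v * Lp a (insert b R - {v}) * Lp b (R - {v}) * vandermonde (R - {v}))"
    using Dw_split[OF assms(1,2), of "\<lambda>v. Lp a (insert b R - {v})"] bR by simp
  also have "(\<Sum>v\<in>R. (-1) ^ pos R v * Lp a (insert b R - {v}) * Lp b (R - {v}) * vandermonde (R - {v}))
     = (Var a - Var b) * (\<Sum>v\<in>R. (-1) ^ pos R v * Lp a (R - {v}) * Lp b (R - {v}) * (vandermonde (R - {v}) :: 'a mpoly))"
    unfolding sum_distrib_left
  proof (rule sum.cong[OF refl])
    fix v assume v: "v \<in> R"
    have "insert b R - {v} = insert b (R - {v})" using v bR by auto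
    then have "Lp a (insert b R - {v}) = (Var a - Var b) * (Lp a (R - {v}) :: 'a mpoly)"
      unfolding Lp_def using assms bR by (simp add: prod.insert)
    then show "(-1) ^ pos R v * Lp a (insert b R - {v}) * Lp b (R - {v}) * vandermonde (R - {v})
       = (Var a - Var b) * ((-1) ^ pos R v * Lp a (R - {v}) * Lp b (R - {v}) * (vandermonde (R - {v}) :: 'a mpoly))"
      by (simp add: mult_ac)
  qed
  also have "vandermonde (insert b R) = Lp b R * (vandermonde R :: 'a mpoly)"
    by (rule vandermonde_insert_min[OF assms(1,2)])
  finally show ?thesis by (simp add: algebra_simps)
qed

lemma D0_rec:
  assumes "finite R" "\<forall>u\<in>R. b < u" "a < b"
  shows "(D0 (insert a (insert b R)) :: 'a::comm_ring_1 mpoly) =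
     Lp b R * D0 (insert a R) - Lp a R * D0 (insert b R)"
proof -
  have aR: "\<forall>u\<in>R. a < u" using assms by auto
  let ?S = "\<lambda>v. (-1) ^ pos R v * vandermonde (R - {v}) :: 'a mpoly"
  have "Lp b R * (\<Sum>v\<in>R. (-1) ^ pos R v * Lp a (R - {v}) * vandermonde (R - {v}))
      - Lp a R * (\<Sum>v\<in>R. (-1) ^ pos R v * Lp b (R - {v}) * vandermonde (R - {v}))
      = - ((Var a - Var b) * (\<Sum>v\<in>R. (-1) ^ pos R v * Lp a (R - {v}) * Lp b (R - {v}) * (vandermonde (R - {v}) :: 'a mpoly)))"
    unfolding sum_distrib_left sum_subtractf[symmetric] sum_negf[symmetric]
  proof (rule sum.cong[OF refl])
    fix v assume v: "v \<in> R"
    have la: "Lp a R = (Var a - Var v) * (Lp a (R - {v}) :: 'a mpoly)" by (rule Lp_remove[OF assms(1) v])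
    have lb: "Lp b R = (Var b - Var v) * (Lp b (R - {v}) :: 'a mpoly)" by (rule Lp_remove[OF assms(1) v])
    show "Lp b R * ((-1) ^ pos R v * Lp a (R - {v}) * vandermonde (R - {v})) -
          Lp a R * ((-1) ^ pos R v * Lp b (R - {v}) * vandermonde (R - {v})) =
          - ((Var a - Var b) * ((-1) ^ pos R v * Lp a (R - {v}) * Lp b (R - {v}) * (vandermonde (R - {v}) :: 'a mpoly)))"
      unfolding la lb by (simp add: algebra_simps)
  qed
  then show ?thesis
    unfolding D0_expr[OF assms] D0_insert_min[OF assms(1) aR] D0_insert_min[OF assms(1,2)]
    by (simp add: algebra_simps)
qed



lemma D0_zero:
  assumes "finite H" "2 \<le> card H"
  shows "(D0 H :: 'a::comm_ring_1 mpoly) = 0"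
  using assms
proof (induction "card H" arbitrary: H rule: less_induct)
  case less
  define a where "a = Min H"
  define H1 where "H1 = H - {a}"
  have ne: "H \<noteq> {}" using less by auto
  have aH: "a \<in> H" using less ne unfolding a_def by auto
  have H: "H = insert a H1" using aH unfolding H1_def by auto
  have fH1: "finite H1" using less unfolding H1_def by auto
  have cH1: "card H1 = card H - 1" using less aH unfolding H1_def by simp
  have aH1: "\<forall>u\<in>H1. a < u"
  proof
    fix u assume "u \<in> H1"
    then have "u \<in> H" "u \<noteq> a" by (auto simp: H1_def)
    moreover have "a \<le> u" using Min_le[of H u] less \<open>u \<in> H\<close> unfolding a_def by auto
    ultimately show "a < u" by simp
  qed
  have ne1: "H1 \<noteq> {}" using cH1 less by auto
  define b where "b = Min H1"
  define R where "R = H1 - {b}"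
  have bH1: "b \<in> H1" using fH1 ne1 unfolding b_def by auto
  have H1: "H1 = insert b R" using bH1 unfolding R_def by auto
  have fR: "finite R" using fH1 unfolding R_def by auto
  have bR: "\<forall>u\<in>R. b < u"
  proof
    fix u assume "u \<in> R"
    then have "u \<in> H1" "u \<noteq> b" by (auto simp: R_def)
    moreover have "b \<le> u" using Min_le[of H1 u] fH1 \<open>u \<in> H1\<close> unfolding b_def by auto
    ultimately show "b < u" by simp
  qed
  have ab: "a < b" using aH1 bH1 by auto
  have cR: "card R = card H - 2" using cH1 bH1 fH1 unfolding R_def by simp
  show ?case
  proof (cases "R = {}")
    case True
    show ?thesis unfolding H H1 D0_expr[OF fR bR ab] using True by (simp add: Lp_def)
  next
    case False
    then have "card R \<ge> 1" using fR by (simp add: Suc_le_eq card_gt_0_iff)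
    have aR: "\<forall>u\<in>R. a < u" using ab bR by auto
    have c1: "card (insert a R) = card R + 1" "card (insert b R) = card R + 1"
      using aR bR fR by auto
    have "(D0 (insert a R) :: 'a mpoly) = 0"
      by (rule less(1)) (use c1 cR less(3) \<open>card R \<ge> 1\<close> fR in auto)
    moreover have "(D0 (insert b R) :: 'a mpoly) = 0"
      by (rule less(1)) (use c1 cR less(3) \<open>card R \<ge> 1\<close> fR in auto)
    ultimately show ?thesis unfolding H H1 D0_rec[OF fR bR ab] by simp
  qed
qed

abbreviation Di :: "nat \<Rightarrow> nat set \<Rightarrow> 'a::comm_ring_1 mpoly" where
  "Di i \<equiv> Dw (\<lambda>v. Var v ^ i)"

lemma Di_rec:
  assumes "finite H" "\<forall>u\<in>H. a < u"
  shows "(Di (Suc i) (insert a H) :: 'a::comm_ring_1 mpoly) = Var a * Di i (insert a H) + Lp a H * Di i H"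
proof -
  let ?s = "\<lambda>v. (-1) ^ pos H v :: 'a mpoly"
  let ?L = "\<lambda>v. Lp a (H - {v}) :: 'a mpoly"
  let ?V = "\<lambda>v. vandermonde (H - {v}) :: 'a mpoly"
  have k1: "Lp a H * Di i H = (\<Sum>v\<in>H. ?s v * Var v ^ i * (Var a - Var v) * ?L v * ?V v)"
    unfolding Dw_def sum_distrib_left
  proof (rule sum.cong[OF refl])
    fix v assume "v \<in> H"
    then have e: "Lp a H = (Var a - Var v) * (Lp a (H - {v}) :: 'a mpoly)" using Lp_remove[OF assms(1), of v a] by simp
    show "Lp a H * ((-1) ^ pos H v * Var v ^ i * vandermonde (H - {v})) =
      ?s v * Var v ^ i * (Var a - Var v) * ?L v * ?V v"
      unfolding e by (simp add: mult_ac)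
  qed
  have k2: "(\<Sum>v\<in>H. ?s v * Var v ^ Suc i * ?L v * ?V v) =
     Var a * (\<Sum>v\<in>H. ?s v * Var v ^ i * ?L v * ?V v) - (\<Sum>v\<in>H. ?s v * Var v ^ i * (Var a - Var v) * ?L v * ?V v)"
    unfolding sum_distrib_left sum_subtractf[symmetric]
    by (rule sum.cong[OF refl]) (simp add: algebra_simps)
  show ?thesis
    unfolding Dw_split[OF assms] k1 k2 by (simp add: right_diff_distrib mult.assoc)
qed

lemma Di_zero:
  assumes "finite H" "i + 2 \<le> card H"
  shows "(Di i H :: 'a::comm_ring_1 mpoly) = 0"
  using assms
proof (induction i arbitrary: H)
  case 0
  then show ?case using D0_zero[of H] by simp
next
  case (Suc i)
  define a where "a = Min H"
  define H1 where "H1 = H - {a}"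
  have ne: "H \<noteq> {}" using Suc.prems by auto
  have aH: "a \<in> H" using Suc.prems ne unfolding a_def by auto
  have H: "H = insert a H1" using aH unfolding H1_def by auto
  have fH1: "finite H1" using Suc.prems unfolding H1_def by auto
  have cH1: "card H1 = card H - 1" using Suc.prems aH unfolding H1_def by simp
  have aH1: "\<forall>u\<in>H1. a < u"
  proof
    fix u assume "u \<in> H1"
    then have "u \<in> H" "u \<noteq> a" by (auto simp: H1_def)
    moreover have "a \<le> u" using Min_le[of H u] Suc.prems \<open>u \<in> H\<close> unfolding a_def by auto
    ultimately show "a < u" by simp
  qed
  have "(Di i H :: 'a mpoly) = 0" using Suc.IH[of H] Suc.prems by simp
  moreover have "(Di i H1 :: 'a mpoly) = 0" using Suc.IH[of H1] Suc.prems cH1 fH1 by simp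
  moreover have e: "(Di (Suc i) H :: 'a mpoly) = Var a * Di i H + Lp a H1 * Di i H1"
    by (rule Di_rec[OF fH1 aH1, of i, folded H])
  ultimately show ?case by (simp only: e mult_zero_right add_0)
qed

definition esym :: "nat set \<Rightarrow> nat \<Rightarrow> 'a::comm_ring_1 mpoly" where
  "esym S j = (\<Sum>\<tau>\<in>{\<tau>. \<tau> \<subseteq> S \<and> card \<tau> = j}. x_set \<tau>)"

lemma esym_0: "finite S \<Longrightarrow> esym S 0 = 1"
proof -
  assume "finite S"
  have "{\<tau>. \<tau> \<subseteq> S \<and> card \<tau> = 0} = {{}}"
  proof (rule set_eqI, rule iffI)
    fix \<tau> assume "\<tau> \<in> {\<tau>. \<tau> \<subseteq> S \<and> card \<tau> = 0}"
    then have "finite \<tau>" "card \<tau> = 0" using \<open>finite S\<close> finite_subset by auto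
    then show "\<tau> \<in> {{}}" by simp
  qed auto
  then show ?thesis by (simp add: esym_def x_set_def)
qed

lemma esym_remove:
  assumes "finite S" "v \<in> S"
  shows "(esym S (Suc j) :: 'a::comm_ring_1 mpoly) = esym (S - {v}) (Suc j) + Var v * esym (S - {v}) j"
proof -
  let ?A = "{\<tau>. \<tau> \<subseteq> S - {v} \<and> card \<tau> = Suc j}"
  let ?B0 = "{\<tau>. \<tau> \<subseteq> S - {v} \<and> card \<tau> = j}"
  have fS: "finite (Pow S)" using assms by auto
  have eq: "{\<tau>. \<tau> \<subseteq> S \<and> card \<tau> = Suc j} = ?A \<union> insert v ` ?B0"
  proof (rule set_eqI, rule iffI)
    fix \<tau> assume t: "\<tau> \<in> {\<tau>. \<tau> \<subseteq> S \<and> card \<tau> = Suc j}"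
    then have tS: "\<tau> \<subseteq> S" and ct: "card \<tau> = Suc j" by simp_all
    have ft: "finite \<tau>" using tS assms(1) by (rule finite_subset)
    show "\<tau> \<in> ?A \<union> insert v ` ?B0"
    proof (cases "v \<in> \<tau>")
      case True
      have "card (\<tau> - {v}) = j" using ct True ft by simp
      moreover have "\<tau> - {v} \<subseteq> S - {v}" using tS by blast
      ultimately have "\<tau> - {v} \<in> ?B0" by simp
      moreover have "\<tau> = insert v (\<tau> - {v})" using True by blast
      ultimately show ?thesis by blast
    next
      case False
      then have "\<tau> \<subseteq> S - {v}" using tS by blast
      then show ?thesis using ct by simp
    qed
  next
    fix \<tau> assume "\<tau> \<in> ?A \<union> insert v ` ?B0"
    then show "\<tau> \<in> {\<tau>. \<tau> \<subseteq> S \<and> card \<tau> = Suc j}"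
    proof
      assume "\<tau> \<in> ?A" then show ?thesis by blast
    next
      assume "\<tau> \<in> insert v ` ?B0"
      then obtain \<sigma> where s: "\<sigma> \<subseteq> S - {v}" "card \<sigma> = j" "\<tau> = insert v \<sigma>" by blast
      have fs: "finite \<sigma>" using s(1) assms(1) finite_subset by blast
      have vs: "v \<notin> \<sigma>" using s(1) by blast
      have "card \<tau> = Suc j" using s(2,3) fs vs by simp
      moreover have "\<tau> \<subseteq> S" using s(1,3) assms(2) by blast
      ultimately show ?thesis by simp
    qed
  qed
  have finA: "finite ?A" by (rule finite_subset[of _ "Pow S"]) (use fS in blast)+
  have finB0: "finite ?B0" by (rule finite_subset[of _ "Pow S"]) (use fS in blast)+
  have disj: "?A \<inter> insert v ` ?B0 = {}" by blast
  have inj: "inj_on (insert v) ?B0" unfolding inj_on_def by blast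
  have "(esym S (Suc j) :: 'a mpoly) = (\<Sum>\<tau>\<in>?A. x_set \<tau>) + (\<Sum>\<tau>\<in>insert v ` ?B0. x_set \<tau>)"
    unfolding esym_def eq by (rule sum.union_disjoint[OF finA _ disj]) (use finB0 in blast)
  also have "(\<Sum>\<tau>\<in>insert v ` ?B0. x_set \<tau> :: 'a mpoly) = (\<Sum>\<tau>\<in>?B0. Var v * x_set \<tau>)"
  proof (subst sum.reindex[OF inj], rule sum.cong[OF refl])
    fix \<sigma> assume s: "\<sigma> \<in> ?B0"
    have "finite \<sigma>" using s assms(1) finite_subset by blast
    moreover have "v \<notin> \<sigma>" using s by blast
    ultimately show "(x_set \<circ> insert v) \<sigma> = (Var v * x_set \<sigma> :: 'a mpoly)"
      by (simp add: x_set_def)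
  qed
  finally show ?thesis unfolding esym_def sum_distrib_left by simp
qed

definition Gij :: "nat \<Rightarrow> nat \<Rightarrow> nat set \<Rightarrow> 'a::comm_ring_1 mpoly" where
  "Gij i j H = Dw (\<lambda>v. Var v ^ i * esym (H - {v}) j) H"

lemma Gij_zero:
  assumes "finite H" "i + j + 2 \<le> card H"
  shows "(Gij i j H :: 'a::comm_ring_1 mpoly) = 0"
  using assms
proof (induction j arbitrary: i)
  case 0
  have "(Gij i 0 H :: 'a mpoly) = Di i H"
    unfolding Gij_def Dw_def by (rule sum.cong) (use 0 in \<open>auto simp: esym_0\<close>)
  then show ?case using Di_zero[of H i] 0 by simp
next
  case (Suc j)
  have "(Gij i (Suc j) H :: 'a mpoly) = esym H (Suc j) * Di i H - Gij (Suc i) j H"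
    unfolding Gij_def Dw_def sum_distrib_left sum_subtractf[symmetric]
  proof (rule sum.cong[OF refl])
    fix v assume v: "v \<in> H"
    show "(-1) ^ pos H v * (Var v ^ i * esym (H - {v}) (Suc j)) * vandermonde (H - {v}) =
         esym H (Suc j) * ((-1) ^ pos H v * Var v ^ i * vandermonde (H - {v})) -
         (-1) ^ pos H v * (Var v ^ Suc i * esym (H - {v}) j) * (vandermonde (H - {v}) :: 'a mpoly)"
      unfolding esym_remove[OF Suc.prems(1) v] by (simp add: algebra_simps)
  qed
  moreover have "(Di i H :: 'a mpoly) = 0" using Di_zero[of H i] Suc.prems by simp
  moreover have "(Gij (Suc i) j H :: 'a mpoly) = 0" using Suc.IH[of "Suc i"] Suc.prems by simp
  ultimately show ?case by simp
qed



definition Phi :: "nat \<Rightarrow> nat set \<Rightarrow> 'a::comm_ring_1 mpoly" where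
  "Phi j G = esym (insert 0 G) j * vandermonde (insert 0 G)"

lemma cone_identity:
  assumes "finite F" "\<forall>u\<in>F. 0 < u" "j + 1 \<le> card F"
  shows "(esym F j * vandermonde F :: 'a::comm_ring_1 mpoly) = (\<Sum>v\<in>F. (-1) ^ pos F v * Phi j (F - {v}))"
proof -
  have c: "card (insert 0 F) = card F + 1" using assms by auto
  have z: "(Gij 0 j (insert 0 F) :: 'a mpoly) = 0"
    by (rule Gij_zero) (use assms c in auto)
  have 0: "insert 0 F - {0} = F" using assms by auto
  have "(Gij 0 j (insert 0 F) :: 'a mpoly) = esym F j * vandermonde F
     - (\<Sum>v\<in>F. (-1) ^ pos F v * Phi j (F - {v}))"
    unfolding Gij_def Dw_split[OF assms(1,2)] 0
  proof (simp, rule sum.cong[OF refl])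
    fix v assume v: "v \<in> F"
    have e1: "insert 0 F - {v} = insert 0 (F - {v})" using v assms by auto
    have e2: "(vandermonde (insert 0 (F - {v})) :: 'a mpoly) = Lp 0 (F - {v}) * vandermonde (F - {v})"
      by (rule vandermonde_insert_min) (use assms in auto)
    show "(-1) ^ pos F v * esym (insert 0 F - {v}) j * Lp 0 (F - {v}) * vandermonde (F - {v})
       = (-1) ^ pos F v * (Phi j (F - {v}) :: 'a mpoly)"
      unfolding Phi_def e1 e2 by (simp add: mult_ac)
  qed
  with z show ?thesis by simp
qed

lemma contract_x_set_self:
  fixes Q :: "'a::comm_ring_1 mpoly"
  assumes "finite \<tau>"
  shows "contract (x_set \<tau>) (x_set \<tau> * Q) = Q"
  by (rule poly_mapping_eqI) (simp add: x_set_eq[OF assms] lookup_contract_single lookup_single_mult_add)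

lemma contract_x_set_sub:
  fixes Q :: "'a::comm_ring_1 mpoly"
  assumes "finite F" "\<tau> \<subseteq> F"
  shows "contract (x_set \<tau>) (x_set F * Q) = x_set (F - \<tau>) * Q"
proof -
  have ft: "finite \<tau>" using assms finite_subset by blast
  have "(x_set F :: 'a mpoly) = x_set (\<tau> \<union> (F - \<tau>))" using assms by (simp add: Un_absorb1)
  also have "\<dots> = x_set \<tau> * x_set (F - \<tau>)"
    by (rule x_set_union) (use assms ft in auto)
  finally show ?thesis using contract_x_set_self[OF ft, of "x_set (F - \<tau>) * Q"]
    by (simp add: mult.assoc)
qed

lemma contract_x_set_notsub:
  fixes P :: "'a::comm_ring_1 mpoly"
  assumes "finite \<tau>" "\<not> \<tau> \<subseteq> F" "vars_in F P"
  shows "contract (x_set \<tau>) P = 0"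
proof (rule poly_mapping_eqI)
  fix m
  have "Poly_Mapping.lookup P (ind \<tau> + m) = 0"
  proof (rule ccontr)
    assume "Poly_Mapping.lookup P (ind \<tau> + m) \<noteq> 0"
    then have "ind \<tau> + m \<in> Poly_Mapping.keys P" by (simp add: in_keys_iff)
    then have "Poly_Mapping.keys (ind \<tau> + m) \<subseteq> F" using assms(3) by (simp add: vars_in_def)
    then have "\<tau> \<subseteq> F" by (simp add: keys_mono_add keys_ind[OF assms(1)])
    with assms(2) show False by simp
  qed
  then show "Poly_Mapping.lookup (contract (x_set \<tau>) P) m = Poly_Mapping.lookup 0 m"
    by (simp add: x_set_eq[OF assms(1)] lookup_contract_single)
qed

lemma vars_in_PF: "F \<subseteq> S \<Longrightarrow> vars_in S (x_set F * vandermonde F)"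
  by (intro vars_in_mult vars_in_x_set vars_in_vandermonde)

lemma contract_elem_sym:
  assumes "finite F" "F \<subseteq> {1..n}" "k \<le> card F"
  shows "contract (elem_sym n k) (x_set F * vandermonde F :: 'a::comm_ring_1 mpoly)
       = esym F (card F - k) * vandermonde F"
proof -
  let ?P = "x_set F * vandermonde F :: 'a mpoly"
  let ?T = "{\<tau>. \<tau> \<subseteq> {1..n} \<and> card \<tau> = k}"
  let ?T' = "{\<tau>. \<tau> \<subseteq> F \<and> card \<tau> = k}"
  have fT: "finite ?T" by (rule finite_subset[of _ "Pow {1..n}"]) auto
  have "contract (elem_sym n k) ?P = (\<Sum>\<tau>\<in>?T. contract (x_set \<tau>) ?P)"
    unfolding elem_sym_def contract_sum_left ..
  also have "\<dots> = (\<Sum>\<tau>\<in>?T'. contract (x_set \<tau>) ?P)"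
  proof (rule sum.mono_neutral_right[OF fT])
    show "?T' \<subseteq> ?T" using assms by auto
    show "\<forall>\<tau>\<in>?T - ?T'. contract (x_set \<tau>) ?P = 0"
    proof
      fix \<tau> assume t: "\<tau> \<in> ?T - ?T'"
      then have "finite \<tau>" using finite_subset[of \<tau> "{1..n}"] by auto
      moreover have "\<not> \<tau> \<subseteq> F" using t by auto
      ultimately show "contract (x_set \<tau>) ?P = 0"
        using contract_x_set_notsub vars_in_PF[of F F] by blast
    qed
  qed
  also have "\<dots> = (\<Sum>\<tau>\<in>?T'. x_set (F - \<tau>) * vandermonde F)"
    by (rule sum.cong[OF refl]) (use assms in \<open>auto intro: contract_x_set_sub\<close>)
  also have "\<dots> = (\<Sum>\<sigma>\<in>{\<sigma>. \<sigma> \<subseteq> F \<and> card \<sigma> = card F - k}. x_set \<sigma> * vandermonde F)"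
  proof (rule sum.reindex_bij_witness[of _ "\<lambda>\<sigma>. F - \<sigma>" "\<lambda>\<tau>. F - \<tau>"])
    fix \<sigma> assume "\<sigma> \<in> {\<sigma>. \<sigma> \<subseteq> F \<and> card \<sigma> = card F - k}"
    then have s: "\<sigma> \<subseteq> F" "card \<sigma> = card F - k" by auto
    then show "F - (F - \<sigma>) = \<sigma>" by auto
    have "card (F - \<sigma>) = card F - card \<sigma>" using s assms(1) by (simp add: card_Diff_subset finite_subset)
    then show "F - \<sigma> \<in> ?T'" using s assms(3) by auto
  next
    fix \<tau> assume "\<tau> \<in> ?T'"
    then have t: "\<tau> \<subseteq> F" "card \<tau> = k" by auto
    then show "F - (F - \<tau>) = \<tau>" by auto
    have "card (F - \<tau>) = card F - card \<tau>" using t assms(1) by (simp add: card_Diff_subset finite_subset)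
    then show "F - \<tau> \<in> {\<sigma>. \<sigma> \<subseteq> F \<and> card \<sigma> = card F - k}" using t by auto
    show "x_set (F - \<tau>) * vandermonde F = (x_set (F - \<tau>) * vandermonde F :: 'a mpoly)" ..
  qed
  also have "\<dots> = esym F (card F - k) * vandermonde F"
    unfolding esym_def sum_distrib_right ..
  finally show ?thesis .
qed



lemma single0_sum: "Poly_Mapping.single 0 (\<Sum>x\<in>A. f x) = (\<Sum>x\<in>A. Poly_Mapping.single 0 (f x) :: 'a::comm_ring_1 mpoly)"
  by (induction A rule: infinite_finite_induct) (auto simp: single_add)

lemma single0_mult: "Poly_Mapping.single 0 (a * b) = (Poly_Mapping.single 0 a * Poly_Mapping.single 0 b :: 'a::comm_ring_1 mpoly)"
  by (simp add: mult_single)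

lemma single0_neg1_pow: "Poly_Mapping.single 0 ((-1) ^ p) = ((-1) ^ p :: 'a::comm_ring_1 mpoly)"
  by (induction p) (auto simp: single0_mult single_uminus)

lemma finite_complex:
  assumes "simplicial_complex n \<Delta>"
  shows "finite \<Delta>"
  by (rule finite_subset[of _ "Pow {1..n}"]) (use assms in \<open>auto simp: simplicial_complex_def\<close>)

lemma face_finite: "simplicial_complex n \<Delta> \<Longrightarrow> F \<in> \<Delta> \<Longrightarrow> finite F"
  unfolding simplicial_complex_def using finite_subset[of F "{1..n}"] by auto

lemma cycle_sum_zero:
  fixes c :: "nat set \<Rightarrow> 'a::comm_ring_1" and \<Phi> :: "nat set \<Rightarrow> 'a mpoly"
  assumes sc: "simplicial_complex n \<Delta>" and cyc: "is_top_cycle \<Delta> d c"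
  shows "(\<Sum>F\<in>d_faces \<Delta> d. Poly_Mapping.single 0 (c F) * (\<Sum>v\<in>F. (-1) ^ pos F v * \<Phi> (F - {v}))) = 0"
proof -
  let ?D = "d_faces \<Delta> d"
  let ?Gs = "{G\<in>\<Delta>. card G = d}"
  let ?N = "\<lambda>G. {v. v \<notin> G \<and> insert v G \<in> \<Delta>}"
  have fD: "finite \<Delta>" by (rule finite_complex[OF sc])
  have fDd: "finite ?D" using fD unfolding d_faces_def by auto
  have fGs: "finite ?Gs" using fD by auto
  have ffaces: "\<And>F. F \<in> \<Delta> \<Longrightarrow> finite F" using face_finite[OF sc] by blast
  have fN: "finite (?N G)" for G
  proof (rule finite_subset[of _ "{1..n}"])
    show "?N G \<subseteq> {1..n}" using sc unfolding simplicial_complex_def by blast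
  qed auto
  have closed: "\<And>F G. F \<in> \<Delta> \<Longrightarrow> G \<subseteq> F \<Longrightarrow> G \<in> \<Delta>" using sc unfolding simplicial_complex_def by blast
  have "(\<Sum>F\<in>?D. Poly_Mapping.single 0 (c F) * (\<Sum>v\<in>F. (-1) ^ pos F v * \<Phi> (F - {v})))
      = (\<Sum>(F,v)\<in>Sigma ?D (\<lambda>F. F). Poly_Mapping.single 0 (c F) * ((-1) ^ pos F v * \<Phi> (F - {v})))"
    unfolding sum_distrib_left
    by (rule sum.Sigma) (use fDd ffaces in \<open>auto simp: d_faces_def\<close>)
  also have "\<dots> = (\<Sum>(G,v)\<in>Sigma ?Gs ?N. Poly_Mapping.single 0 (c (insert v G)) * ((-1) ^ card {u\<in>G. u < v} * \<Phi> G))"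
  proof (rule sum.reindex_bij_witness[of _ "\<lambda>(G,v). (insert v G, v)" "\<lambda>(F,v). (F - {v}, v)"])
    fix b assume "b \<in> Sigma ?D (\<lambda>F. F)"
    then obtain F v where b: "b = (F, v)" "F \<in> \<Delta>" "card F = d + 1" "v \<in> F" by (auto simp: d_faces_def)
    have fF: "finite F" using ffaces b by auto
    show "(case case b of (F, v) \<Rightarrow> (F - {v}, v) of (G, v) \<Rightarrow> (insert v G, v)) = b"
      using b by auto
    have "F - {v} \<in> \<Delta>" using closed b by blast
    moreover have "card (F - {v}) = d" using b fF by simp
    moreover have "insert v (F - {v}) \<in> \<Delta>" using b by (simp add: insert_absorb)
    ultimately show "(case b of (F, v) \<Rightarrow> (F - {v}, v)) \<in> Sigma ?Gs ?N"
      using b by auto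
    have "pos F v = card {u\<in>F - {v}. u < v}"
      unfolding pos_def by (rule arg_cong[where f=card]) auto
    then show "(case case b of (F, v) \<Rightarrow> (F - {v}, v) of
          (G, v) \<Rightarrow> Poly_Mapping.single 0 (c (insert v G)) * ((-1) ^ card {u \<in> G. u < v} * \<Phi> G)) =
         (case b of (F, v) \<Rightarrow> Poly_Mapping.single 0 (c F) * ((-1) ^ pos F v * \<Phi> (F - {v})))"
      using b by (simp add: insert_absorb)
  next
    fix a assume "a \<in> Sigma ?Gs ?N"
    then obtain G v where a: "a = (G, v)" "G \<in> \<Delta>" "card G = d" "v \<notin> G" "insert v G \<in> \<Delta>" by auto
    have fG: "finite G" using ffaces a by auto
    show "(case case a of (G, v) \<Rightarrow> (insert v G, v) of (F, v) \<Rightarrow> (F - {v}, v)) = a"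
      using a by auto
    show "(case a of (G, v) \<Rightarrow> (insert v G, v)) \<in> Sigma ?D (\<lambda>F. F)"
      using a fG by (auto simp: d_faces_def)
  qed
  also have "\<dots> = (\<Sum>G\<in>?Gs. \<Sum>v\<in>?N G. Poly_Mapping.single 0 (c (insert v G)) * ((-1) ^ card {u\<in>G. u < v} * \<Phi> G))"
    by (rule sum.Sigma[symmetric]) (use fGs fN in auto)
  also have "\<dots> = (\<Sum>G\<in>?Gs. \<Phi> G * Poly_Mapping.single 0 (boundary_coeff \<Delta> c G))"
  proof (rule sum.cong[OF refl])
    fix G
    show "(\<Sum>v\<in>?N G. Poly_Mapping.single 0 (c (insert v G)) * ((-1) ^ card {u\<in>G. u < v} * \<Phi> G))
       = \<Phi> G * Poly_Mapping.single 0 (boundary_coeff \<Delta> c G)"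
      unfolding boundary_coeff_def single0_sum single0_mult single0_neg1_pow sum_distrib_left
      by (rule sum.cong[OF refl]) (simp add: mult_ac)
  qed
  also have "\<dots> = 0"
    using cyc unfolding is_top_cycle_def by (intro sum.neutral) auto
  finally show ?thesis .
qed



lemma contract_0_right [simp]: "contract g 0 = 0"
  by (simp add: contract_def)

lemma contract_term:
  fixes a :: "'a::comm_ring_1"
  shows "contract g (Poly_Mapping.single 0 a * x_set F * vandermonde F)
     = Poly_Mapping.single 0 a * contract g (x_set F * vandermonde F)"
  by (simp add: mult.assoc contract_scalar_right)

lemma faces_sub:
  assumes "simplicial_complex n \<Delta>" "F \<in> d_faces \<Delta> d"
  shows "F \<subseteq> {1..n}" "finite F" "card F = d + 1" "F \<in> \<Delta>"
  using assms face_finite[of n \<Delta> F] by (auto simp: simplicial_complex_def d_faces_def)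

lemma esym_contract_zero:
  fixes c :: "nat set \<Rightarrow> 'a::comm_ring_1"
  assumes sc: "simplicial_complex n \<Delta>" and cyc: "is_top_cycle \<Delta> d c"
    and k: "1 \<le> k" "k \<le> d + 1"
  shows "contract (elem_sym n k) (F_Delta \<Delta> d c) = 0"
proof -
  let ?j = "d + 1 - k"
  have "contract (elem_sym n k) (F_Delta \<Delta> d c)
     = (\<Sum>F\<in>d_faces \<Delta> d. Poly_Mapping.single 0 (c F) * (\<Sum>v\<in>F. (-1) ^ pos F v * Phi ?j (F - {v})))"
    unfolding F_Delta_def contract_sum_right contract_term
  proof (rule sum.cong[OF refl])
    fix F assume F: "F \<in> d_faces \<Delta> d"
    note f = faces_sub[OF sc F]
    have "contract (elem_sym n k) (x_set F * vandermonde F :: 'a mpoly) = esym F ?j * vandermonde F"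
      using contract_elem_sym[OF f(2) f(1), of k] f(3) k by simp
    also have "\<dots> = (\<Sum>v\<in>F. (-1) ^ pos F v * Phi ?j (F - {v}))"
      by (rule cone_identity) (use f k in auto)
    finally show "Poly_Mapping.single 0 (c F) * contract (elem_sym n k) (x_set F * vandermonde F) =
         Poly_Mapping.single 0 (c F) * (\<Sum>v\<in>F. (-1) ^ pos F v * Phi ?j (F - {v}))" by simp
  qed
  also have "\<dots> = 0" by (rule cycle_sum_zero[OF sc cyc])
  finally show ?thesis .
qed

lemma SR_contract_zero:
  fixes c :: "nat set \<Rightarrow> 'a::comm_ring_1"
  assumes sc: "simplicial_complex n \<Delta>" and t: "\<tau> \<subseteq> {1..n}" "\<tau> \<notin> \<Delta>"
  shows "contract (x_set \<tau>) (F_Delta \<Delta> d c) = 0"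
  unfolding F_Delta_def contract_sum_right contract_term
proof (rule sum.neutral, rule ballI)
  fix F assume F: "F \<in> d_faces \<Delta> d"
  note f = faces_sub[OF sc F]
  have "\<not> \<tau> \<subseteq> F" using sc t f(4) unfolding simplicial_complex_def by blast
  moreover have "finite \<tau>" using t finite_subset by blast
  ultimately have "contract (x_set \<tau>) (x_set F * vandermonde F :: 'a mpoly) = 0"
    using contract_x_set_notsub vars_in_PF[of F F] by blast
  then show "Poly_Mapping.single 0 (c F) * contract (x_set \<tau>) (x_set F * vandermonde F) = 0" by simp
qed

lemma ideal_contract_zero:
  assumes "\<forall>g\<in>Gs. contract g G = 0" "p \<in> ideal_gen n Gs"
  shows "contract p (G :: 'a::comm_ring_1 mpoly) = 0"
proof -
  obtain h where p: "p = (\<Sum>g\<in>Gs. h g * g)" using assms(2) unfolding ideal_gen_def by blast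
  show ?thesis unfolding p contract_sum_left contract_mult using assms(1) by simp
qed

lemma F_Delta_hom:
  fixes c :: "nat set \<Rightarrow> 'a::comm_ring_1"
  assumes sc: "simplicial_complex n \<Delta>"
  shows "homogeneous ((d + 2) choose 2) (F_Delta \<Delta> d c)"
  unfolding F_Delta_def
proof (rule hom_sum)
  fix F assume F: "F \<in> d_faces \<Delta> d"
  note f = faces_sub[OF sc F]
  have e: "(d + 2) choose 2 = 0 + card F + (card F choose 2)"
    using f(3) by (simp add: numeral_2_eq_2)
  show "homogeneous ((d + 2) choose 2) (Poly_Mapping.single 0 (c F) * x_set F * vandermonde F)"
    unfolding e by (intro hom_mult hom_const hom_x_set hom_vandermonde f(2))
qed

lemma F_Delta_ring:
  fixes c :: "nat set \<Rightarrow> 'a::comm_ring_1"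
  assumes sc: "simplicial_complex n \<Delta>"
  shows "F_Delta \<Delta> d c \<in> poly_ring n"
proof -
  have "vars_in {1..n} (F_Delta \<Delta> d c)"
    unfolding F_Delta_def
  proof (rule vars_in_sum)
    fix F assume F: "F \<in> d_faces \<Delta> d"
    note f = faces_sub[OF sc F]
    show "vars_in {1..n} (Poly_Mapping.single 0 (c F) * x_set F * vandermonde F)"
      by (intro vars_in_mult vars_in_const vars_in_x_set vars_in_vandermonde f(1))
  qed
  then show ?thesis by (simp add: vars_in_def poly_ring_def)
qed

lemma keys_PF:
  fixes Q :: "'a::comm_ring_1 mpoly"
  assumes "finite F" "vars_in F Q" "m \<in> Poly_Mapping.keys (x_set F * Q)"
  shows "Poly_Mapping.keys m = F"
proof -
  have "m \<in> {a + b | a b. a \<in> Poly_Mapping.keys (x_set F :: 'a mpoly) \<and> b \<in> Poly_Mapping.keys Q}"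
    using keys_mult assms(3) by blast
  then obtain b where "m = ind F + b" "b \<in> Poly_Mapping.keys Q"
    by (auto simp: x_set_eq[OF assms(1)])
  then show ?thesis using assms(2) keys_ind[OF assms(1)] by (auto simp: keys_mono_add vars_in_def)
qed

lemma Var_diff_nonzero: "i \<noteq> j \<Longrightarrow> (Var i - Var j :: 'a::comm_ring_1 mpoly) \<noteq> 0"
proof
  assume ij: "i \<noteq> j" and z: "(Var i - Var j :: 'a mpoly) = 0"
  have "Poly_Mapping.single i (1::nat) \<noteq> Poly_Mapping.single j 1"
    using ij by (metis lookup_single_eq lookup_single_not_eq one_neq_zero)
  then have "Poly_Mapping.lookup (Var i - Var j :: 'a mpoly) (Poly_Mapping.single i 1) = 1"
    by (simp add: Var_def lookup_minus lookup_single when_def)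
  with z show False by simp
qed

lemma ball_not_ex: "\<forall>x\<in>A. P x \<noteq> 0 \<Longrightarrow> \<not> (\<exists>x\<in>A. P x = 0)"
  by blast

lemma vandermonde_nonzero: "finite F \<Longrightarrow> (vandermonde F :: 'a::field mpoly) \<noteq> 0"
proof -
  assume fF: "finite F"
  have fin: "finite {(i,j). i \<in> F \<and> j \<in> F \<and> i < j}"
    by (rule finite_subset[of _ "F \<times> F"]) (use fF in auto)
  have "\<forall>x\<in>{(i,j). i \<in> F \<and> j \<in> F \<and> i < j}. (case x of (i, j) \<Rightarrow> (Var i - Var j :: 'a mpoly)) \<noteq> 0"
  proof
    fix x assume "x \<in> {(i,j). i \<in> F \<and> j \<in> F \<and> i < j}"
    then obtain i j where x: "x = (i, j)" "i < j" by blast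
    then have "i \<noteq> j" by simp
    then show "(case x of (i, j) \<Rightarrow> (Var i - Var j :: 'a mpoly)) \<noteq> 0"
      using Var_diff_nonzero[of i j] x(1) by simp
  qed
  then show ?thesis
    unfolding vandermonde_def prod_zero_iff[OF fin] by (rule ball_not_ex)
qed

lemma F_Delta_nonzero:
  fixes c :: "nat set \<Rightarrow> 'a::field"
  assumes sc: "simplicial_complex n \<Delta>" and ex: "\<exists>F\<in>d_faces \<Delta> d. c F \<noteq> 0"
  shows "F_Delta \<Delta> d c \<noteq> 0"
proof -
  obtain F0 where F0: "F0 \<in> d_faces \<Delta> d" "c F0 \<noteq> 0" using ex by blast
  note f0 = faces_sub[OF sc F0(1)]
  let ?P = "\<lambda>F. x_set F * vandermonde F :: 'a mpoly"
  have s0: "Poly_Mapping.single (ind F0) (1::'a) \<noteq> 0"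
    by (metis lookup_single_eq lookup_zero one_neq_zero)
  have "?P F0 \<noteq> 0" using vandermonde_nonzero[OF f0(2)] s0 by (simp add: x_set_eq[OF f0(2)])
  then obtain \<mu> where mu: "\<mu> \<in> Poly_Mapping.keys (?P F0)"
    by (metis keys_eq_empty ex_in_conv)
  have kmu: "Poly_Mapping.keys \<mu> = F0"
    by (rule keys_PF[OF f0(2) _ mu]) (rule vars_in_vandermonde, simp)
  have sc0: "Poly_Mapping.lookup (Poly_Mapping.single 0 a * R) k = a * Poly_Mapping.lookup R k" for a and R :: "'a mpoly" and k
    using lookup_single_mult_add[of 0 a R k] by simp
  have fD: "finite (d_faces \<Delta> d)" using finite_complex[OF sc] unfolding d_faces_def by auto
  have "Poly_Mapping.lookup (F_Delta \<Delta> d c) \<mu> = (\<Sum>F\<in>d_faces \<Delta> d. c F * Poly_Mapping.lookup (?P F) \<mu>)"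
    unfolding F_Delta_def lookup_sum by (simp add: mult.assoc sc0)
  also have "\<dots> = c F0 * Poly_Mapping.lookup (?P F0) \<mu>"
  proof -
    have "(\<Sum>F\<in>d_faces \<Delta> d - {F0}. c F * Poly_Mapping.lookup (?P F) \<mu>) = 0"
    proof (rule sum.neutral, rule ballI)
      fix F assume F': "F \<in> d_faces \<Delta> d - {F0}"
      then have F: "F \<in> d_faces \<Delta> d" "F \<noteq> F0" by auto
      note f = faces_sub[OF sc F(1)]
      have "\<mu> \<notin> Poly_Mapping.keys (?P F)"
      proof
        assume "\<mu> \<in> Poly_Mapping.keys (?P F)"
        then have "Poly_Mapping.keys \<mu> = F"
          by (rule keys_PF[OF f(2) vars_in_vandermonde[of F F, simplified]])
        with kmu F(2) show False by simp
      qed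
      then show "c F * Poly_Mapping.lookup (?P F) \<mu> = 0" by (simp add: in_keys_iff)
    qed
    then show ?thesis using sum.remove[OF fD F0(1), of "\<lambda>F. c F * Poly_Mapping.lookup (?P F) \<mu>"] by simp
  qed
  also have "\<dots> \<noteq> 0" using F0(2) mu by (simp add: in_keys_iff)
  finally show ?thesis by auto
qed

theorem theorem4p2:
  fixes n d :: nat and \<Delta> :: "nat set set" and c :: "nat set \<Rightarrow> 'a::field"
  assumes "simplicial_complex n \<Delta>"
    and "dim_complex \<Delta> d"
    and "is_top_cycle \<Delta> d c"
    and "\<exists>F\<in>d_faces \<Delta> d. c F \<noteq> 0"
  shows "F_Delta \<Delta> d c \<in> coinv_stresses n \<Delta> d ((d + 2) choose 2)
    \<and> (\<exists>G\<in>coinv_stresses n \<Delta> d ((d + 2) choose 2). G \<noteq> (0::'a mpoly))"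
proof -
  have gens: "\<forall>g\<in>(SR_gens n \<Delta> \<union> elem_sym n ` {1..d+1} :: 'a mpoly set). contract g (F_Delta \<Delta> d c) = 0"
  proof
    fix g :: "'a mpoly" assume "g \<in> (SR_gens n \<Delta> \<union> elem_sym n ` {1..d+1} :: 'a mpoly set)"
    then show "contract g (F_Delta \<Delta> d c) = 0"
    proof
      assume "g \<in> SR_gens n \<Delta>"
      then obtain \<tau> where "\<tau> \<subseteq> {1..n}" "\<tau> \<notin> \<Delta>" "g = x_set \<tau>" unfolding SR_gens_def by blast
      then show ?thesis using SR_contract_zero[OF assms(1), of \<tau> d c] by simp
    next
      assume "g \<in> elem_sym n ` {1..d+1}"
      then obtain k where "1 \<le> k" "k \<le> d + 1" "g = elem_sym n k" by auto
      then show ?thesis using esym_contract_zero[OF assms(1) assms(3), of k] by simp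
    qed
  qed
  have i: "\<forall>p\<in>ideal_gen n (SR_gens n \<Delta> \<union> elem_sym n ` {1..d+1}). contract p (F_Delta \<Delta> d c) = 0"
  proof
    fix p :: "'a mpoly" assume "p \<in> ideal_gen n (SR_gens n \<Delta> \<union> elem_sym n ` {1..d+1})"
    then show "contract p (F_Delta \<Delta> d c) = 0" by (rule ideal_contract_zero[OF gens])
  qed
  have mem: "F_Delta \<Delta> d c \<in> coinv_stresses n \<Delta> d ((d + 2) choose 2)"
    unfolding coinv_stresses_def inverse_system_deg_def coinv_ideal_def
    using F_Delta_ring[OF assms(1), of d c] F_Delta_hom[OF assms(1), of d c] i by simp
  moreover have "F_Delta \<Delta> d c \<noteq> 0" by (rule F_Delta_nonzero[OF assms(1) assms(4)])
  ultimately show ?thesis by blast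
qed


end
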